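(* Let $N\geq 10^{100000}$ be a real number and $f_N(x)=\dfrac{\log N+\log(x-1)}{\log x}$ for real $x>1$. Let $M\geq 10^5$ be a real number. Then for every $x$ with $M\leq x\leq 2M$ and every $1\leq k\leq 6$, $$0.999999<\frac{f_N^{(k)}(M)}{f_N^{(k)}(x)}<\gamma_k,$$ where $\gamma_1=2.24808$, $\gamma_2=4.53426$, $\gamma_3=9.11515$, $\gamma_4=18.2994$, $\gamma_5=36.7099$, $\gamma_6=73.6077$.
   Context: $f_N^{(k)}$ denotes the $k$-th derivative of $f_N$; $\log$ is the natural logarithm. *)

theory Defs
  imports "HOL-Analysis.Analysis"
begin

definition fN :: "real \<Rightarrow> real \<Rightarrow> real" where
  "fN N x = (ln N + ln (x - 1)) / ln x"

definition gamma_const :: "nat \<Rightarrow> real" where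
  "gamma_const k = (if k = 1 then 2.24808 else if k = 2 then 4.53426
     else if k = 3 then 9.11515 else if k = 4 then 18.2994
     else if k = 5 then 36.7099 else 73.6077)"

end

theory Submission
  imports Defs "HOL-Computational_Algebra.Polynomial"
begin



fun Qp :: "nat \<Rightarrow> real poly" where
  "Qp 0 = [:0,1:]"
| "Qp (Suc m) = smult (of_nat m) (Qp m) + [:0,0,1:] * pderiv (Qp m)"

definition gfam :: "nat \<Rightarrow> real \<Rightarrow> real" where
  "gfam m y = (-1)^m / y^m * poly (Qp m) (1 / ln y)"

definition afam :: "real \<Rightarrow> nat \<Rightarrow> real \<Rightarrow> real" where
  "afam L j y = (if j = 0 then L + ln (y-1) - ln y
     else (-1)^(j-1) * fact (j-1) * (1/(y-1)^j - 1/y^j))"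

lemma pow_pred_mult: "(y::real) * y ^ (k - Suc 0) = (if k = 0 then y else y ^ k)"
  by (cases k) auto

lemma gfam_deriv:
  assumes "y > 1"
  shows "(gfam m has_real_derivative gfam (Suc m) y) (at y)"
proof -
  have ly: "ln y > 0" using assms by simp
  have y0: "y > 0" using assms by simp
  have h1: "((\<lambda>y. 1 / ln y) has_real_derivative (- 1 / (y * (ln y)^2))) (at y)"
    using ly y0 by (auto intro!: derivative_eq_intros simp: field_simps power2_eq_square)
  have h2: "((\<lambda>y. poly (Qp m) (1 / ln y)) has_real_derivative
      (- 1 / (y * (ln y)^2)) * poly (pderiv (Qp m)) (1 / ln y)) (at y)"
    by (rule has_field_derivative_poly[OF h1])
  have h3: "((\<lambda>y. (-1)^m / y^m) has_real_derivative (-1)^m * (- real m) / y^(Suc m)) (at y)"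
  proof (cases m)
    case 0
    then show ?thesis by simp
  next
    case (Suc n)
    show ?thesis unfolding Suc using y0
      by (auto intro!: derivative_eq_intros simp: field_simps power2_eq_square pow_pred_mult)
  qed
  have "((\<lambda>y. (-1)^m / y^m * poly (Qp m) (1 / ln y)) has_real_derivative
     (-1)^m * (- real m) / y^(Suc m) * poly (Qp m) (1 / ln y) +
     (- 1 / (y * (ln y)^2)) * poly (pderiv (Qp m)) (1 / ln y) * ((-1)^m / y^m)) (at y)"
    by (rule DERIV_mult[OF h3 h2])
  moreover have "(-1)^m * (- real m) / y^(Suc m) * poly (Qp m) (1 / ln y) +
     (- 1 / (y * (ln y)^2)) * poly (pderiv (Qp m)) (1 / ln y) * ((-1)^m / y^m) = gfam (Suc m) y"
    using ly y0 by (simp add: gfam_def field_simps power2_eq_square)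
  ultimately show ?thesis unfolding gfam_def[abs_def] by simp
qed

lemma inv_pow_aux:
  assumes "(z::real) > 0"
  shows "- (a * z^m * inverse ((z^Suc m) ^ Suc (Suc 0))) = - a / z^(Suc (Suc m))"
proof -
  have e: "(z^Suc m)^Suc (Suc 0) = z^m * z^(Suc (Suc m))"
    by (simp only: power_mult[symmetric] power_add[symmetric]) simp
  show ?thesis using assms by (simp add: e field_simps)
qed

lemma inv_pow_deriv:
  assumes "y - c > 0"
  shows "((\<lambda>y. 1 / (y - c)^n) has_real_derivative - real n / (y - c)^(Suc n)) (at y)"
proof (cases n)
  case 0
  then show ?thesis by simp
next
  case (Suc m)
  have d0: "((\<lambda>y. (y-c)^Suc m) has_real_derivative (1 + real m) * ((1 - 0) * (y-c)^m)) (at y)"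
    by (rule DERIV_power_Suc[OF DERIV_diff[OF DERIV_ident DERIV_const]])
  have d: "((\<lambda>y. (y-c)^Suc m) has_real_derivative real (Suc m) * (y-c)^m) (at y)"
    using d0 by simp
  have "((\<lambda>y. inverse ((y-c)^Suc m)) has_real_derivative
      - (real (Suc m) * (y-c)^m * inverse (((y-c)^Suc m) ^ Suc (Suc 0)))) (at y)"
    by (rule DERIV_inverse_fun[OF d]) (use assms in simp)
  moreover have "- (real (Suc m) * (y-c)^m * inverse (((y-c)^Suc m) ^ Suc (Suc 0)))
     = - real n / (y - c)^(Suc n)"
    using inv_pow_aux[of "y - c" "real (Suc m)" m] assms Suc by simp
  ultimately show ?thesis using Suc by (simp add: inverse_eq_divide)
qed

lemma Suc_choose': "Suc n choose k = (n choose k) + (if k = 0 then 0 else (n choose (k-1)))"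
  by (cases k) simp_all

lemma afam_deriv:
  assumes "y > 1"
  shows "(afam L j has_real_derivative afam L (Suc j) y) (at y)"
proof (cases j)
  case 0
  have "((\<lambda>y. L + ln (y-1) - ln y) has_real_derivative 1/(y-1) - 1/y) (at y)"
    using assms by (auto intro!: derivative_eq_intros simp: field_simps)
  moreover have "afam L 0 = (\<lambda>y. L + ln (y-1) - ln y)" by (simp add: afam_def[abs_def])
  ultimately show ?thesis using 0 by (simp add: afam_def)
next
  case (Suc i)
  have h1: "((\<lambda>y. 1 / (y - 1)^(Suc i)) has_real_derivative - real (Suc i) / (y - 1)^(Suc (Suc i))) (at y)"
    by (rule inv_pow_deriv) (use assms in simp)
  have h2: "((\<lambda>y. 1 / (y - 0)^(Suc i)) has_real_derivative - real (Suc i) / (y - 0)^(Suc (Suc i))) (at y)"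
    by (rule inv_pow_deriv) (use assms in simp)
  have "((\<lambda>y. (-1)^i * fact i * (1 / (y - 1)^(Suc i) - 1 / (y - 0)^(Suc i))) has_real_derivative
     (-1)^i * fact i * (- real (Suc i) / (y - 1)^(Suc (Suc i)) - (- real (Suc i) / (y - 0)^(Suc (Suc i))))) (at y)"
    by (intro DERIV_cmult DERIV_diff h1 h2)
  moreover have "afam L (Suc i) = (\<lambda>y. (-1)^i * fact i * (1 / (y - 1)^(Suc i) - 1 / (y - 0)^(Suc i)))"
    by (simp add: afam_def[abs_def])
  moreover have "(-1)^i * fact i * (- real (Suc i) / (y - 1)^(Suc (Suc i)) - (- real (Suc i) / (y - 0)^(Suc (Suc i))))
      = afam L (Suc (Suc i)) y"
    by (simp add: afam_def field_simps)
  ultimately show ?thesis using Suc by simp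
qed

lemma higher_deriv_family:
  fixes F :: "nat \<Rightarrow> real \<Rightarrow> real"
  assumes S: "open S" and D: "\<And>n y. y \<in> S \<Longrightarrow> (F n has_real_derivative F (Suc n) y) (at y)"
    and f: "\<And>y. y \<in> S \<Longrightarrow> f y = F 0 y" and y: "y \<in> S"
  shows "(deriv ^^ n) f y = F n y"
  using y
proof (induction n arbitrary: y)
  case 0
  then show ?case using f by simp
next
  case (Suc n)
  have "((deriv ^^ n) f has_real_derivative F (Suc n) y) (at y)"
    by (rule has_field_derivative_transform_within_open[OF D[OF Suc.prems] S Suc.prems]) (simp add: Suc.IH)
  then show ?case by (simp add: DERIV_imp_deriv)
qed

lemma leibniz_family:
  fixes F G :: "nat \<Rightarrow> real \<Rightarrow> real"
  assumes DF: "\<And>n. (F n has_real_derivative F (Suc n) y) (at y)"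
    and DG: "\<And>n. (G n has_real_derivative G (Suc n) y) (at y)"
  shows "((\<lambda>y. \<Sum>i=0..n. real (n choose i) * F i y * G (n-i) y) has_real_derivative
           (\<Sum>i=0..Suc n. real (Suc n choose i) * F i y * G (Suc n - i) y)) (at y)"
proof -
  have "((\<lambda>y. \<Sum>i=0..n. real (n choose i) * F i y * G (n-i) y) has_real_derivative
     (\<Sum>i=0..n. real (n choose i) * (F (Suc i) y * G (n-i) y + G (Suc (n-i)) y * F i y))) (at y)"
  proof (intro DERIV_sum)
    fix i
    show "((\<lambda>y. real (n choose i) * F i y * G (n-i) y) has_real_derivative
      real (n choose i) * (F (Suc i) y * G (n-i) y + G (Suc (n-i)) y * F i y)) (at y)"
      using DERIV_cmult[OF DERIV_mult[OF DF DG], of "real (n choose i)" i "n-i"] by (simp add: mult.assoc)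
  qed
  moreover have "(\<Sum>i=0..n. real (n choose i) * (F (Suc i) y * G (n-i) y + G (Suc (n-i)) y * F i y))
      = (\<Sum>i=0..Suc n. real (Suc n choose i) * F i y * G (Suc n - i) y)"
  proof -
    have A: "(\<Sum>i=0..Suc n. real (Suc n choose i) * F i y * G (Suc n - i) y)
       = (\<Sum>i=0..Suc n. real (n choose i) * F i y * G (Suc n - i) y)
         + (\<Sum>i=0..Suc n. (if i = 0 then 0 else real (n choose (i - 1))) * F i y * G (Suc n - i) y)"
    proof -
      have e: "\<And>i. real (Suc n choose i) = real (n choose i) + (if i = 0 then 0 else real (n choose (i - 1)))"
        by (simp add: Suc_choose')
      show ?thesis unfolding sum.distrib[symmetric]
        by (intro sum.cong refl) (simp only: e distrib_right)
    qed
    have B: "(\<Sum>i=0..Suc n. real (n choose i) * F i y * G (Suc n - i) y)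
       = (\<Sum>i=0..n. real (n choose i) * G (Suc (n-i)) y * F i y)"
      by (simp add: sum.atLeast0_atMost_Suc binomial_eq_0) (intro sum.cong refl, simp add: Suc_diff_le mult_ac)
    have C: "(\<Sum>i=0..Suc n. (if i = 0 then 0 else real (n choose (i - 1))) * F i y * G (Suc n - i) y)
       = (\<Sum>i=0..n. real (n choose i) * F (Suc i) y * G (n-i) y)"
      by (subst sum.atLeast0_atMost_Suc_shift) simp
    show ?thesis using A B C by (simp add: sum.distrib algebra_simps)
  qed
  ultimately show ?thesis by simp
qed

definition wfam :: "real \<Rightarrow> nat \<Rightarrow> real \<Rightarrow> real" where
  "wfam L n y = (if n = 0 then 1 else 0) + (\<Sum>i=0..n. real (n choose i) * afam L i y * gfam (n-i) y)"

lemma wfam_deriv: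
  assumes "y > 1"
  shows "(wfam L n has_real_derivative wfam L (Suc n) y) (at y)"
proof -
  have "((\<lambda>y. (if n = 0 then 1 else 0) + (\<Sum>i=0..n. real (n choose i) * afam L i y * gfam (n-i) y))
     has_real_derivative 0 + (\<Sum>i=0..Suc n. real (Suc n choose i) * afam L i y * gfam (Suc n - i) y)) (at y)"
    by (intro DERIV_add DERIV_const leibniz_family afam_deriv gfam_deriv assms)
  then show ?thesis by (simp add: wfam_def[abs_def])
qed

lemma fN_wfam:
  assumes "y > 1"
  shows "fN N y = wfam (ln N) 0 y"
proof -
  have "ln y > 0" using assms by simp
  then show ?thesis by (simp add: fN_def wfam_def afam_def gfam_def field_simps)
qed

lemma deriv_fN:
  assumes "y > 1"
  shows "(deriv ^^ k) (fN N) y = wfam (ln N) k y"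
  by (rule higher_deriv_family[of "{1<..}"]) (use assms wfam_deriv fN_wfam in auto)

lemma sign_aux:
  fixes u1 u2 X Y c f A P :: real
  assumes "u1 * u1 = 1" "u2 * u2 = 1" "Y \<noteq> 0"
  shows "-(u1 * u2)  *  (X * Y)  *  (c * (u1 * f * A) * (u2/Y * P)) = -(c * f * (X * A) * P)"
proof -
  have "-(u1 * u2)  *  (X * Y)  *  (c * (u1 * f * A) * (u2/Y * P)) = -((u1 * u1) * (u2 * u2) * (Y * inverse Y)) * (c * f * (X * A) * P)"
    by (simp add: divide_inverse mult_ac)
  then show ?thesis using assms by simp
qed

lemma term_eq:
  assumes "y > 1"
  shows "(-1)^(Suc j + r) * y^(Suc j + r) * (c * afam L (Suc j) y * gfam r y)
     = - (c * fact j * ((y/(y-1))^Suc j - 1) * poly (Qp r) (1 / ln y))"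
proof -
  have s1: "((-1::real)^j) * (-1)^j = 1" by (simp flip: power_add)
  have s2: "((-1::real)^r) * (-1)^r = 1" by (simp flip: power_add)
  have y0: "y > 0" "y - 1 > 0" using assms by auto
  have e: "y^Suc j * (1/(y-1)^Suc j - 1/y^Suc j) = (y/(y-1))^Suc j - 1"
    using y0 by (simp add: field_simps power_divide)
  have p1: "(-1::real)^(Suc j + r) = -((-1)^j * (-1)^r)" by (simp add: power_add)
  have p2: "y^(Suc j + r) = y^Suc j * y^r" by (simp add: power_add)
  have a1: "afam L (Suc j) y = (-1)^j * fact j * (1/(y-1)^Suc j - 1/y^Suc j)" by (simp add: afam_def)
  have g1: "gfam r y = (-1)^r / y^r * poly (Qp r) (1 / ln y)" by (simp add: gfam_def)
  show ?thesis unfolding p1 p2 a1 g1 e[symmetric]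
    by (rule sign_aux[OF s1 s2]) (use y0 in simp)
qed

lemma T_form:
  assumes "y > 1" "k \<ge> 1"
  shows "(-1)^k * y^k * wfam L k y = afam L 0 y * poly (Qp k) (1 / ln y)
     - (\<Sum>i=1..k. real (k choose i) * fact (i-1) * ((y/(y-1))^i - 1) * poly (Qp (k-i)) (1 / ln y))"
proof -
  have s: "((-1::real)^k) * (-1)^k = 1" by (simp flip: power_add)
  have y0: "y > 0" using assms by auto
  have "(-1)^k * y^k * wfam L k y = (-1)^k * y^k * (\<Sum>i=0..k. real (k choose i) * afam L i y * gfam (k-i) y)"
    using assms by (simp add: wfam_def)
  also have "\<dots> = (-1)^k * y^k * (afam L 0 y * gfam k y) + (\<Sum>i=1..k. (-1)^k * y^k * (real (k choose i) * afam L i y * gfam (k-i) y))"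
    by (simp add: sum.atLeast_Suc_atMost sum_distrib_left algebra_simps)
  also have "(-1)^k * y^k * (afam L 0 y * gfam k y) = afam L 0 y * poly (Qp k) (1 / ln y)"
    using y0 s by (simp add: gfam_def field_simps)
  also have "(\<Sum>i=1..k. (-1)^k * y^k * (real (k choose i) * afam L i y * gfam (k-i) y))
     = (\<Sum>i=1..k. - (real (k choose i) * fact (i-1) * ((y/(y-1))^i - 1) * poly (Qp (k-i)) (1 / ln y)))"
  proof (intro sum.cong refl)
    fix i assume i: "i \<in> {1..k}"
    then obtain j r where ij: "i = Suc j" "k = Suc j + r" by (metis Suc_pred' add_diff_inverse_nat atLeastAtMost_iff less_le_trans not_le zero_less_one)
    show "(-1)^k * y^k * (real (k choose i) * afam L i y * gfam (k-i) y)
        = - (real (k choose i) * fact (i-1) * ((y/(y-1))^i - 1) * poly (Qp (k-i)) (1 / ln y))"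
      using term_eq[OF assms(1), of j r "real (k choose i)" L] ij by simp
  qed
  finally show ?thesis by (simp add: sum_negf)
qed



lemma exp_lower_sum:
  fixes x :: real
  assumes "0 \<le> x"
  shows "(\<Sum>m<n. x^m / fact m) \<le> exp x"
proof -
  obtain t where t: "\<bar>t\<bar> \<le> \<bar>x\<bar>" "exp x = (\<Sum>m<n. x^m / fact m) + exp t / fact n * x^n"
    using Maclaurin_exp_le by blast
  have "0 \<le> exp t / fact n * x^n" using assms by simp
  then show ?thesis using t(2) by linarith
qed

lemma exp_upper_sum:
  fixes x :: real
  assumes "0 \<le> x" "x^n / fact n < 1"
  shows "exp x \<le> (\<Sum>m<n. x^m / fact m) / (1 - x^n / fact n)"
proof -
  define r where "r = x^n / fact n"
  define S where "S = (\<Sum>m<n. x^m / fact m)"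
  obtain t where t: "\<bar>t\<bar> \<le> \<bar>x\<bar>" "exp x = (\<Sum>m<n. x^m / fact m) + exp t / fact n * x^n"
    using Maclaurin_exp_le by blast
  have ex: "exp x = S + exp t * r" using t(2) by (simp add: S_def r_def)
  have r0: "r \<ge> 0" "r < 1" using assms by (simp_all add: r_def)
  have "t \<le> x" using t(1) assms by linarith
  then have "exp t \<le> exp x" by simp
  then have "exp t * r \<le> exp x * r" using r0 by (simp add: mult_right_mono)
  then have "exp x * (1 - r) \<le> S" using ex by (simp add: algebra_simps)
  then have "exp x \<le> S / (1 - r)" using r0 by (simp add: pos_le_divide_eq)
  then show ?thesis by (simp add: S_def r_def)
qed

lemma ln2_upper: "ln (2::real) \<le> 7050/10171"
proof -
  have "(2::real) \<le> (\<Sum>m<11. (7050/10171::real)^m / fact m)"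
    by (simp add: eval_nat_numeral)
  also have "\<dots> \<le> exp (7050/10171)" by (rule exp_lower_sum) simp
  finally have "ln (2::real) \<le> ln (exp (7050/10171))" by (subst ln_le_cancel_iff) auto
  then show ?thesis by simp
qed

lemma ln2_lower: "18419/26573 \<le> ln (2::real)"
proof -
  have "exp (18419/26573::real) \<le> (\<Sum>m<11. (18419/26573::real)^m / fact m) / (1 - (18419/26573)^11 / fact 11)"
    by (rule exp_upper_sum) (simp_all add: eval_nat_numeral)
  also have "\<dots> \<le> 2" by (simp add: eval_nat_numeral)
  finally have "ln (exp (18419/26573)) \<le> ln (2::real)" by (subst ln_le_cancel_iff) auto
  then show ?thesis by simp
qed

lemma ln54_lower: "5436/24361 \<le> ln (5/4::real)"
proof -
  have "exp (5436/24361::real) \<le> (\<Sum>m<7. (5436/24361::real)^m / fact m) / (1 - (5436/24361)^7 / fact 7)"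
    by (rule exp_upper_sum) (simp_all add: eval_nat_numeral)
  also have "\<dots> \<le> 5/4" by (simp add: eval_nat_numeral)
  finally have "ln (exp (5436/24361)) \<le> ln (5/4::real)" by (subst ln_le_cancel_iff) auto
  then show ?thesis by simp
qed

lemma ln10_lower: "61905/5377/5 \<le> ln (10::real)"
proof -
  have "ln (10::real) = 3 * ln 2 + ln (5/4)"
  proof -
    have "(10::real) = 2^3 * (5/4)" by simp
    then have "ln (10::real) = ln (2^3 * (5/4))" by simp
    also have "\<dots> = ln (2^3) + ln (5/4)" by (rule ln_mult_pos) auto
    finally have "ln (10::real) = ln (2^3) + ln (5/4)" .
    moreover have "ln (2^3::real) = 3 * ln 2" using ln_realpow[of "2::real" 3] by simp
    ultimately show ?thesis by simp
  qed
  then show ?thesis using ln2_lower ln54_lower by simp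
qed

lemma ln10_upper: "ln (10::real) \<le> 2.33"
proof -
  have "ln (10::real) = 3 * ln 2 + ln (5/4)"
  proof -
    have "(10::real) = 2^3 * (5/4)" by simp
    then have "ln (10::real) = ln (2^3 * (5/4))" by simp
    also have "\<dots> = ln (2^3) + ln (5/4)" by (rule ln_mult_pos) auto
    finally have "ln (10::real) = ln (2^3) + ln (5/4)" .
    moreover have "ln (2^3::real) = 3 * ln 2" using ln_realpow[of "2::real" 3] by simp
    ultimately show ?thesis by simp
  qed
  moreover have "ln (5/4::real) \<le> 5/4 - 1" by (rule ln_le_minus_one) simp
  ultimately show ?thesis using ln2_upper by simp
qed

lemma ln_1e5: "61905/5377 \<le> ln ((10::real)^5)" "ln ((10::real)^5) \<le> 12"
proof -
  have e: "ln ((10::real)^5) = 5 * ln 10" using ln_realpow[of "10::real" 5] by simp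
  show "61905/5377 \<le> ln ((10::real)^5)" using e ln10_lower by simp
  show "ln ((10::real)^5) \<le> 12" using e ln10_upper by simp
qed

lemma ln_over_mono:
  fixes y0 y :: real
  assumes "y0 \<ge> exp 1" "y0 \<le> y"
  shows "ln y / y \<le> ln y0 / y0"
proof -
  have y00: "y0 > 0" using assms(1) by (meson exp_gt_zero less_le_trans)
  define z where "z = y / y0"
  have z1: "z \<ge> 1" using assms y00 by (simp add: z_def)
  have yz: "y = y0 * z" using y00 by (simp add: z_def)
  have l1: "ln y0 \<ge> 1" using assms(1) y00 by (metis ln_exp ln_le_cancel_iff exp_gt_zero)
  have "ln y = ln y0 + ln z" using yz y00 z1 by (simp add: ln_mult_pos)
  also have "\<dots> \<le> ln y0 + (z - 1)" using ln_le_minus_one[of z] z1 by simp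
  also have "\<dots> \<le> ln y0 + (z - 1) * ln y0" using z1 l1 by (simp add: mult_le_cancel_left1)
  also have "\<dots> = z * ln y0" by (simp add: algebra_simps)
  finally have "ln y \<le> z * ln y0" .
  moreover have y0': "y > 0" using yz y00 z1 by simp
  ultimately have "ln y / y \<le> (z * ln y0) / y" by (simp add: divide_right_mono)
  also have "\<dots> = ln y0 / y0" using yz z1 y00 by simp
  finally show ?thesis .
qed

lemma ln_over_1e5:
  fixes y :: real
  assumes "y \<ge> 10^5"
  shows "ln y / y \<le> 12 / 10^5" "ln y \<ge> 11"
proof -
  have "exp (1::real) \<le> 3" by (rule exp_le)
  then have "exp 1 \<le> (10::real)^5" by simp
  then have "ln y / y \<le> ln ((10::real)^5) / 10^5" by (rule ln_over_mono[OF _ assms])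
  also have "\<dots> \<le> 12 / 10^5" using ln_1e5(2) by (simp add: divide_right_mono)
  finally show "ln y / y \<le> 12 / 10^5" .
  have "ln ((10::real)^5) \<le> ln y" using assms by (subst ln_le_cancel_iff) auto
  then show "ln y \<ge> 11" using ln_1e5(1) by simp
qed

lemma p6_bound:
  fixes y :: real
  assumes "y \<ge> 10^5"
  shows "(y/(y-1))^6 - 1 \<le> 13 / y"
proof -
  define e where "e = 1 / (y - 1)"
  have y1: "y - 1 \<ge> 99999" using assms by simp
  have e0: "e > 0" using y1 by (simp add: e_def)
  have e1: "e \<le> 1/99999" using y1 by (simp add: e_def frac_le)
  have pe: "y/(y-1) = 1 + e" using y1 by (simp add: e_def field_simps)
  have ex: "(1+e)^6 = 1 + 6*e + 15*e^2 + 20*e^3 + 15*e^4 + 6*e^5 + e^6"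
    by (simp add: algebra_simps power_numeral_reduce eval_nat_numeral)
  have q2: "e^2 \<le> e / 99999" using e0 e1 by (simp add: power2_eq_square mult_left_mono)
  have qn: "e^n \<le> e^2" if "n \<ge> 2" for n
    using power_decreasing[OF that, of e] e0 e1 by simp
  have "(1+e)^6 - 1 \<le> 6*e + 57 * (e / 99999)"
    using ex q2 qn[of 3] qn[of 4] qn[of 5] qn[of 6] e0 by simp
  also have "\<dots> = (600051/99999) * e" by simp
  also have "\<dots> \<le> 13 / y"
  proof -
    have "(600051/99999) * y \<le> 13 * (y - 1)" using assms by simp
    then have "(600051/99999) * y / (y - 1) \<le> 13" using y1 by (simp add: pos_divide_le_eq)
    then have "(600051/99999) * e * y \<le> 13" by (simp add: e_def)
    then show ?thesis using assms by (simp add: pos_le_divide_eq)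
  qed
  finally show ?thesis using pe by simp
qed




lemma afam0_bounds:
  fixes y L :: real
  assumes "y \<ge> 10^5"
  shows "L - 1/(y-1) \<le> afam L 0 y" "afam L 0 y \<le> L"
proof -
  have y1: "y - 1 > 0" using assms by simp
  have "ln (y-1) \<le> ln y" using y1 by (subst ln_le_cancel_iff) auto
  then show "afam L 0 y \<le> L" by (simp add: afam_def)
  have "ln y - ln (y-1) = ln (y/(y-1))" using y1 by (simp add: ln_divide_pos)
  also have "\<dots> \<le> y/(y-1) - 1" using y1 by (intro ln_le_minus_one) simp
  also have "\<dots> = 1/(y-1)" using y1 by (simp add: field_simps)
  finally show "L - 1/(y-1) \<le> afam L 0 y" by (simp add: afam_def)
qed

lemma T_bounds:
  fixes L y c :: real and k :: nat
  assumes y: "y \<ge> 10^5" and k: "1 \<le> k" "k \<le> 6" and L: "L \<ge> 230000"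
    and c: "c > 0"
    and hq: "\<And>t. 0 < t \<Longrightarrow> t \<le> 1/11 \<Longrightarrow> c * t^2 \<le> poly (Qp k) t"
    and hS: "\<And>t. 0 < t \<Longrightarrow> t \<le> 1/11 \<Longrightarrow>
       (\<Sum>i=1..k. real (k choose i) * fact (i-1) * poly (Qp (k-i)) t) \<le> 2 * c * t"
    and hnn: "\<And>m t. m < k \<Longrightarrow> 0 \<le> t \<Longrightarrow> 0 \<le> poly (Qp m) t"
  shows "(1 - 2/10^8) * (afam L 0 y * poly (Qp k) (1/ln y)) \<le> (-1)^k * y^k * wfam L k y"
        "(-1)^k * y^k * wfam L k y \<le> afam L 0 y * poly (Qp k) (1/ln y)"
proof -
  define t where "t = 1 / ln y"
  define p where "p = y / (y - 1)"
  define a where "a = afam L 0 y"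
  define E where "E = (\<Sum>i=1..k. real (k choose i) * fact (i-1) * (p^i - 1) * poly (Qp (k-i)) t)"
  define SS where "SS = (\<Sum>i=1..k. real (k choose i) * fact (i-1) * poly (Qp (k-i)) t)"
  have y0: "y > 1" using y by simp
  have lny: "ln y \<ge> 11" "ln y / y \<le> 12 / 10^5" using ln_over_1e5[OF y] by auto
  have t0: "0 < t" "t \<le> 1/11" using lny by (auto simp: t_def field_simps)
  have p1: "p \<ge> 1" using y0 by (simp add: p_def)
  have Tf: "(-1)^k * y^k * wfam L k y = a * poly (Qp k) t - E"
    using T_form[OF y0 k(1), of L] by (simp add: a_def E_def t_def p_def)
  have ab: "L - 1/(y-1) \<le> a" "a \<le> L" using afam0_bounds[OF y, of L] by (auto simp: a_def)
  have "1/(y-1) \<le> 1" using y by simp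
  then have a1: "a \<ge> 229999" using ab L by linarith
  have E0: "0 \<le> E" unfolding E_def
  proof (intro sum_nonneg)
    fix i assume i: "i \<in> {1..k}"
    have "0 \<le> p^i - 1" using p1 by (simp add: one_le_power)
    moreover have "0 \<le> poly (Qp (k-i)) t" using hnn[of "k-i" t] i t0 by auto
    ultimately show "0 \<le> real (k choose i) * fact (i-1) * (p^i - 1) * poly (Qp (k-i)) t" by simp
  qed
  have SS0: "0 \<le> SS" unfolding SS_def
  proof (intro sum_nonneg)
    fix i assume i: "i \<in> {1..k}"
    have "0 \<le> poly (Qp (k-i)) t" using hnn[of "k-i" t] i t0 by auto
    then show "0 \<le> real (k choose i) * fact (i-1) * poly (Qp (k-i)) t" by simp
  qed
  have "E \<le> (\<Sum>i=1..k. (p^6 - 1) * (real (k choose i) * fact (i-1) * poly (Qp (k-i)) t))"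
    unfolding E_def
  proof (intro sum_mono)
    fix i assume i: "i \<in> {1..k}"
    have "p^i \<le> p^6" using p1 i k by (intro power_increasing) auto
    moreover have "0 \<le> real (k choose i) * fact (i-1) * poly (Qp (k-i)) t" using hnn[of "k-i" t] i t0 by auto
    ultimately have "(p^i - 1) * (real (k choose i) * fact (i-1) * poly (Qp (k-i)) t)
       \<le> (p^6 - 1) * (real (k choose i) * fact (i-1) * poly (Qp (k-i)) t)"
      by (intro mult_right_mono) auto
    then show "real (k choose i) * fact (i-1) * (p^i - 1) * poly (Qp (k-i)) t
       \<le> (p^6 - 1) * (real (k choose i) * fact (i-1) * poly (Qp (k-i)) t)" by (simp add: mult_ac)
  qed
  also have "\<dots> = (p^6 - 1) * SS" by (simp add: SS_def sum_distrib_left)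
  also have "\<dots> \<le> (13 / y) * (2 * c * t)"
  proof (intro mult_mono)
    show "p^6 - 1 \<le> 13 / y" using p6_bound[OF y] by (simp add: p_def)
    show "SS \<le> 2 * c * t" using hS[OF t0] by (simp add: SS_def)
    show "0 \<le> 13 / y" using y by simp
    show "0 \<le> SS" by (rule SS0)
  qed
  also have "\<dots> \<le> 2/10^8 * a * (c * t^2)"
  proof -
    have "26 * ln y \<le> 26 * (12 / 10^5 * y)" using lny(2) y0 by (simp add: pos_divide_le_eq)
    also have "\<dots> \<le> 2/10^8 * 229999 * y" using y0 by simp
    also have "\<dots> \<le> 2/10^8 * a * y" using a1 y0 by (intro mult_right_mono) auto
    finally have A: "26 * ln y \<le> 2/10^8 * a * y" .
    have lp: "ln y > 0" using lny by simp
    have B: "26 / y \<le> 2/10^8 * a * t"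
      using A y0 lp by (simp add: t_def field_simps)
    have "(13 / y) * (2 * c * t) = (c * t) * (26 / y)" by simp
    also have "\<dots> \<le> (c * t) * (2/10^8 * a * t)" using B c t0 by (intro mult_left_mono) auto
    also have "\<dots> = 2/10^8 * a * (c * t^2)" by (simp add: power2_eq_square mult_ac)
    finally show ?thesis .
  qed
  also have "\<dots> \<le> 2/10^8 * a * poly (Qp k) t"
    using hq[OF t0] a1 by (intro mult_left_mono) auto
  finally have Eb: "E \<le> 2/10^8 * a * poly (Qp k) t" .
  show "(1 - 2/10^8) * (afam L 0 y * poly (Qp k) (1/ln y)) \<le> (-1)^k * y^k * wfam L k y"
    using Tf Eb by (simp add: a_def t_def algebra_simps)
  show "(-1)^k * y^k * wfam L k y \<le> afam L 0 y * poly (Qp k) (1/ln y)"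
    using Tf E0 by (simp add: a_def t_def)
qed



lemma ratio_arith:
  fixes M x TM Tx aM ax qM qx qxl L g g' :: real and k :: nat
  assumes M: "0 < M" "M \<le> x" "x \<le> 2*M" and L: "L \<ge> 230000"
    and a: "L - 1/10^4 \<le> aM" "aM \<le> L" "L - 1/10^4 \<le> ax" "ax \<le> L"
    and T: "(1 - 2/10^8) * (aM*qM) \<le> TM" "TM \<le> aM*qM" "(1 - 2/10^8)*(ax*qx) \<le> Tx" "Tx \<le> ax*qx"
    and q: "0 < qxl" "qxl \<le> qx" "qx \<le> qM"
    and r: "2^k * qM \<le> g' * qxl" "g' \<le> g*(1 - 3/10^8)"
  shows "0.999999 < (TM / M^k) / (Tx / x^k)" "(TM / M^k) / (Tx / x^k) < g"
proof -
  have x0: "x > 0" using M by simp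
  have qx0: "qx > 0" "qM > 0" using q by auto
  have aM0: "aM > 0" "ax > 0" using a L by auto
  have Tx0: "Tx > 0"
  proof -
    have "0 < (1 - 2/10^8)*(ax*qx)" using aM0 qx0 by simp
    then show ?thesis using T by linarith
  qed
  have e: "(TM / M^k) / (Tx / x^k) = (x/M)^k * (TM / Tx)"
    using M x0 Tx0 by (simp add: field_simps power_divide)
  have xm1: "1 \<le> (x/M)^k" using M by (simp add: one_le_power)
  have xm2: "(x/M)^k \<le> 2^k" using M by (intro power_mono) (auto simp: field_simps)
  have TMlow: "(1 - 2/10^8) * (L - 1/10^4) * qM \<le> TM"
  proof -
    have "(1 - 2/10^8) * (L - 1/10^4) * qM \<le> (1 - 2/10^8) * (aM * qM)"
      using a qx0 by (simp add: mult_right_mono)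
    then show ?thesis using T by linarith
  qed
  have TMup: "TM \<le> L * qM"
  proof -
    have "aM * qM \<le> L * qM" by (rule mult_right_mono) (use a qx0 in auto)
    then show ?thesis using T by linarith
  qed
  have Txup: "Tx \<le> L * qM"
  proof -
    have "ax * qx \<le> L * qM" using a q aM0 by (intro mult_mono) auto
    then show ?thesis using T by linarith
  qed
  have Txlow: "(1 - 2/10^8) * (L - 1/10^4) * qxl \<le> Tx"
  proof -
    have "(L - 1/10^4) * qxl \<le> ax * qx" using a q L by (intro mult_mono) auto
    then have "(1 - 2/10^8) * ((L - 1/10^4) * qxl) \<le> (1 - 2/10^8) * (ax * qx)"
      by (rule mult_left_mono) simp
    moreover have "(1 - 2/10^8) * (L - 1/10^4) * qxl = (1 - 2/10^8) * ((L - 1/10^4) * qxl)"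
      by (simp only: mult.assoc)
    ultimately show ?thesis using T by linarith
  qed
  have rho_low: "0.999999 < TM / Tx"
  proof -
    have "0.999999 * (L * qM) < (1 - 2/10^8) * (L - 1/10^4) * qM"
    proof -
      have "0.999999 * L < (1 - 2/10^8) * (L - 1/10^4)" using L by (simp add: algebra_simps)
      then show ?thesis using qx0 by (simp add: mult_ac)
    qed
    also have "\<dots> \<le> TM" by (rule TMlow)
    finally have "0.999999 * (L * qM) < TM" .
    moreover have "0.999999 * Tx \<le> 0.999999 * (L * qM)" using Txup by simp
    ultimately have "0.999999 * Tx < TM" by linarith
    then show ?thesis using Tx0 by (simp add: pos_less_divide_eq)
  qed
  have rho0: "0 \<le> TM / Tx" by (rule less_imp_le[OF le_less_trans[OF _ rho_low]]) simp
  show "0.999999 < (TM / M^k) / (Tx / x^k)"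
  proof -
    from rho0 have "1 * (TM / Tx) \<le> (x/M)^k * (TM / Tx)"
      by (rule mult_right_mono[OF xm1])
    then have "TM / Tx \<le> (x/M)^k * (TM / Tx)" by simp
    then show ?thesis using e rho_low by linarith
  qed
  have g0: "g > 0"
  proof -
    have "0 < 2^k * qM" using qx0 by simp
    then have "0 < g' * qxl" using r by linarith
    then have "g' > 0" using q by (simp add: zero_less_mult_iff)
    then have "0 < g * (1 - 3/10^8)" using r by linarith
    then show ?thesis by (simp add: zero_less_mult_iff)
  qed
  have D: "0 < (1 - 2/10^8) * (L - 1/10^4) * qxl" using L q by simp
  have "(x/M)^k * (TM / Tx) \<le> 2^k * (L * qM / ((1 - 2/10^8) * (L - 1/10^4) * qxl))"
  proof (intro mult_mono xm2)
    show "TM / Tx \<le> L * qM / ((1 - 2/10^8) * (L - 1/10^4) * qxl)"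
    proof (rule frac_le)
      show "0 \<le> L * qM" using L qx0 by simp
      show "TM \<le> L * qM" by (rule TMup)
      show "0 < (1 - 2/10^8) * (L - 1/10^4) * qxl" by (rule D)
      show "(1 - 2/10^8) * (L - 1/10^4) * qxl \<le> Tx" by (rule Txlow)
    qed
    show "0 \<le> TM / Tx" by (rule rho0)
  qed auto
  also have "\<dots> = (2^k * qM) * L / ((1 - 2/10^8) * (L - 1/10^4) * qxl)" by simp
  also have "\<dots> \<le> (g' * qxl) * L / ((1 - 2/10^8) * (L - 1/10^4) * qxl)"
    using r D L by (intro divide_right_mono mult_right_mono) auto
  also have "\<dots> = g' * L / ((1 - 2/10^8) * (L - 1/10^4))" using q by simp
  also have "\<dots> < g"
  proof -
    have "g' * L \<le> g * (1 - 3/10^8) * L" using r L by (intro mult_right_mono) auto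
    also have "\<dots> < g * ((1 - 2/10^8) * (L - 1/10^4))"
    proof -
      have "(1 - 3/10^8) * L < (1 - 2/10^8) * (L - 1/10^4)" using L by (simp add: algebra_simps)
      then show ?thesis using g0 by (simp add: mult_ac)
    qed
    finally show ?thesis using L by (simp add: pos_divide_less_eq)
  qed
  finally show "(TM / M^k) / (Tx / x^k) < g" using e by simp
qed




lemma tpow_le:
  fixes t :: real
  assumes "0 < t" "t \<le> 1/11"
  shows "t^(Suc j) \<le> t * (1/11)^j"
proof -
  have "t^j \<le> (1/11)^j" using assms by (intro power_mono) auto
  then show ?thesis using assms by (simp add: mult_left_mono)
qed

lemma tpow_le2:
  fixes t :: real
  assumes "0 < t" "t \<le> 1/11" "1 \<le> n"
  shows "t^n \<le> t * (1/11)^(n-1)"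
  using tpow_le[OF assms(1,2), of "n-1"] assms(3) by simp

lemma diff_le: "(X::real) - Y = Z \<Longrightarrow> 0 \<le> Z \<Longrightarrow> Y \<le> X"
  by simp

lemma cross_le:
  fixes u w c g A B :: real
  assumes "u > 0" "w > 0" "c * A * w^d \<le> g * B * u^d"
  shows "c * (A / u^d) \<le> g * (B / w^d)"
proof -
  have ud: "u^d > 0" "w^d > 0" using assms by simp_all
  have "c * (A / u^d) = (c * A * w^d) / (u^d * w^d)" using ud assms(1,2) by (simp add: field_simps)
  also have "\<dots> \<le> (g * B * u^d) / (u^d * w^d)" using assms(3) ud by (intro divide_right_mono) auto
  also have "\<dots> = g * (B / w^d)" using ud assms(1,2) by (simp add: field_simps)
  finally show ?thesis .
qed

lemma Qeq0: "poly (Qp 0) t = 1 * t"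
  by (simp add: eval_nat_numeral pderiv_pCons field_simps power_numeral_reduce)

lemma Qeq1: "poly (Qp 1) t = 1 * t^2"
  by (simp add: eval_nat_numeral pderiv_pCons field_simps power_numeral_reduce)

lemma Qeq2: "poly (Qp 2) t = 1 * t^2 + 2 * t^3"
  by (simp add: eval_nat_numeral pderiv_pCons field_simps power_numeral_reduce)

lemma Qeq3: "poly (Qp 3) t = 2 * t^2 + 6 * t^3 + 6 * t^4"
  by (simp add: eval_nat_numeral pderiv_pCons field_simps power_numeral_reduce)

lemma Qeq4: "poly (Qp 4) t = 6 * t^2 + 22 * t^3 + 36 * t^4 + 24 * t^5"
  by (simp add: eval_nat_numeral pderiv_pCons field_simps power_numeral_reduce)

lemma Qeq5: "poly (Qp 5) t = 24 * t^2 + 100 * t^3 + 210 * t^4 + 240 * t^5 + 120 * t^6"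
  by (simp add: eval_nat_numeral pderiv_pCons field_simps power_numeral_reduce)

lemma Qeq6: "poly (Qp 6) t = 120 * t^2 + 548 * t^3 + 1350 * t^4 + 2040 * t^5 + 1800 * t^6 + 720 * t^7"
  by (simp add: eval_nat_numeral pderiv_pCons field_simps power_numeral_reduce)

lemma QeqS0: "poly (Qp (0)) t = 1 * t"
  using Qeq0[of t] by (simp add: eval_nat_numeral)

lemma QeqS1: "poly (Qp (Suc (0))) t = 1 * t^2"
  using Qeq1[of t] by (simp add: eval_nat_numeral)

lemma QeqS2: "poly (Qp (Suc (Suc (0)))) t = 1 * t^2 + 2 * t^3"
  using Qeq2[of t] by (simp add: eval_nat_numeral)

lemma QeqS3: "poly (Qp (Suc (Suc (Suc (0))))) t = 2 * t^2 + 6 * t^3 + 6 * t^4"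
  using Qeq3[of t] by (simp add: eval_nat_numeral)

lemma QeqS4: "poly (Qp (Suc (Suc (Suc (Suc (0)))))) t = 6 * t^2 + 22 * t^3 + 36 * t^4 + 24 * t^5"
  using Qeq4[of t] by (simp add: eval_nat_numeral)

lemma QeqS5: "poly (Qp (Suc (Suc (Suc (Suc (Suc (0))))))) t = 24 * t^2 + 100 * t^3 + 210 * t^4 + 240 * t^5 + 120 * t^6"
  using Qeq5[of t] by (simp add: eval_nat_numeral)

lemma QeqS6: "poly (Qp (Suc (Suc (Suc (Suc (Suc (Suc (0)))))))) t = 120 * t^2 + 548 * t^3 + 1350 * t^4 + 2040 * t^5 + 1800 * t^6 + 720 * t^7"
  using Qeq6[of t] by (simp add: eval_nat_numeral)

declare Qp.simps[simp del]

lemma Qnn: "m < 6 \<Longrightarrow> 0 \<le> t \<Longrightarrow> 0 \<le> poly (Qp m) t"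
proof -
  assume m: "m < 6" and t: "0 \<le> t"
  have "m = 0 \<or> m = 1 \<or> m = 2 \<or> m = 3 \<or> m = 4 \<or> m = 5" using m by auto
  then show ?thesis using t by (auto simp: QeqS0 QeqS1 QeqS2 QeqS3 QeqS4 QeqS5 QeqS6 Qeq0 Qeq1 Qeq2 Qeq3 Qeq4 Qeq5 Qeq6)
qed

lemma hq1: "0 < t \<Longrightarrow> t \<le> 1/11 \<Longrightarrow> 1 * t^2 \<le> poly (Qp 1) (t::real)"
proof -
  assume t: "0 < t"
  have "True" using t by simp_all
  then show ?thesis unfolding Qeq1 by linarith
qed

lemma hS1: "0 < t \<Longrightarrow> t \<le> 1/11 \<Longrightarrow> (\<Sum>i=1..1. real (1 choose i) * fact (i-1) * poly (Qp (1-i)) t) \<le> 2 * 1 * (t::real)"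
proof -
  assume t: "0 < t" "t \<le> 1/11"
  have e: "(\<Sum>i=1..1. real (1 choose i) * fact (i-1) * poly (Qp (1-i)) t) = 1 * t"
    by (simp add: sum.atLeast_Suc_atMost eval_nat_numeral QeqS0 QeqS1 QeqS2 QeqS3 QeqS4 QeqS5 QeqS6 algebra_simps)
  have "True" by simp
  show ?thesis unfolding e using t  by linarith
qed

lemma hmono1: "0 \<le> s \<Longrightarrow> s \<le> t \<Longrightarrow> poly (Qp 1) s \<le> poly (Qp 1) (t::real)"
  unfolding Qeq1 by (intro add_mono mult_left_mono power_mono order_refl) auto

lemma QU1: "(u::real) > 0 \<Longrightarrow> poly (Qp 1) (1/u) = (1) / u^2"
  by (simp add: Qeq1 field_simps power_numeral_reduce QeqS1)

lemma pid1: fixes v :: real shows "(2248079/1000000) * (1) * ((61905/5377) + v)^2 - 2^1 * (1) * ((61905/5377) + v + (7050/10171))^2 = (86851009525815279/119637512029763560000) + (16076741692929/5468946700000) * v + (248079/1000000) * v^2"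
  by algebra

lemma hratio1: "u \<ge> (61905/5377) \<Longrightarrow> 2^1 * poly (Qp 1) (1/u) \<le> (2248079/1000000) * poly (Qp 1) (1/(u + (7050/10171)))"
proof -
  assume u: "u \<ge> (61905/5377)"
  define v where "v = u - (61905/5377)"
  have v0: "v \<ge> 0" and uv: "u = (61905/5377) + v" using u by (simp_all add: v_def)
  have nn: "0 \<le> (86851009525815279/119637512029763560000) + (16076741692929/5468946700000) * v + (248079/1000000) * v^2" using v0 by (intro add_nonneg_nonneg mult_nonneg_nonneg zero_le_power) simp_all
  have ineq: "2^1 * (1) * ((61905/5377) + v + (7050/10171))^2 \<le> (2248079/1000000) * (1) * ((61905/5377) + v)^2" by (rule diff_le[OF pid1 nn])
  have pu: "((61905/5377) + v) > 0" "((61905/5377) + v + (7050/10171)) > 0" using v0 by simp_all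
  show ?thesis unfolding uv QU1[OF pu(1)] QU1[OF pu(2)] by (rule cross_le[OF pu ineq])
qed

lemma hq2: "0 < t \<Longrightarrow> t \<le> 1/11 \<Longrightarrow> 1 * t^2 \<le> poly (Qp 2) (t::real)"
proof -
  assume t: "0 < t"
  have "0 \<le> t^3" using t by simp_all
  then show ?thesis unfolding Qeq2 by linarith
qed

lemma hS2: "0 < t \<Longrightarrow> t \<le> 1/11 \<Longrightarrow> (\<Sum>i=1..2. real (2 choose i) * fact (i-1) * poly (Qp (2-i)) t) \<le> 2 * 1 * (t::real)"
proof -
  assume t: "0 < t" "t \<le> 1/11"
  have e: "(\<Sum>i=1..2. real (2 choose i) * fact (i-1) * poly (Qp (2-i)) t) = 1 * t + 2 * t^2"
    by (simp add: sum.atLeast_Suc_atMost eval_nat_numeral QeqS0 QeqS1 QeqS2 QeqS3 QeqS4 QeqS5 QeqS6 algebra_simps)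
  have tf2: "t^2 \<le> t * (1/11)" by (rule order_trans[OF tpow_le2[OF t, of 2]]) (simp_all add: power_numeral_reduce)
  show ?thesis unfolding e using t tf2 by linarith
qed

lemma hmono2: "0 \<le> s \<Longrightarrow> s \<le> t \<Longrightarrow> poly (Qp 2) s \<le> poly (Qp 2) (t::real)"
  unfolding Qeq2 by (intro add_mono mult_left_mono power_mono order_refl) auto

lemma QU2: "(u::real) > 0 \<Longrightarrow> poly (Qp 2) (1/u) = (2 + 1 * u) / u^3"
  by (simp add: Qeq2 field_simps power_numeral_reduce QeqS1)

lemma pid2: fixes v :: real shows "(4534259/1000000) * (2 + 1 * ((61905/5377) + v + (7050/10171))) * ((61905/5377) + v)^3 - 2^2 * (2 + 1 * ((61905/5377) + v)) * ((61905/5377) + v + (7050/10171))^3 = (334243630967910126978430784781/7036247313278842067747178008000) + (1798674632344400812624635461937/1635727941528464308105630000) * v + (77961518458368405087069/299093780074408900000) * v^2 + (280245191313809/13672366750000) * v^3 + (534259/1000000) * v^4"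
  by algebra

lemma hratio2: "u \<ge> (61905/5377) \<Longrightarrow> 2^2 * poly (Qp 2) (1/u) \<le> (4534259/1000000) * poly (Qp 2) (1/(u + (7050/10171)))"
proof -
  assume u: "u \<ge> (61905/5377)"
  define v where "v = u - (61905/5377)"
  have v0: "v \<ge> 0" and uv: "u = (61905/5377) + v" using u by (simp_all add: v_def)
  have nn: "0 \<le> (334243630967910126978430784781/7036247313278842067747178008000) + (1798674632344400812624635461937/1635727941528464308105630000) * v + (77961518458368405087069/299093780074408900000) * v^2 + (280245191313809/13672366750000) * v^3 + (534259/1000000) * v^4" using v0 by (intro add_nonneg_nonneg mult_nonneg_nonneg zero_le_power) simp_all
  have ineq: "2^2 * (2 + 1 * ((61905/5377) + v)) * ((61905/5377) + v + (7050/10171))^3 \<le> (4534259/1000000) * (2 + 1 * ((61905/5377) + v + (7050/10171))) * ((61905/5377) + v)^3" by (rule diff_le[OF pid2 nn])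
  have pu: "((61905/5377) + v) > 0" "((61905/5377) + v + (7050/10171)) > 0" using v0 by simp_all
  show ?thesis unfolding uv QU2[OF pu(1)] QU2[OF pu(2)] by (rule cross_le[OF pu ineq])
qed

lemma hq3: "0 < t \<Longrightarrow> t \<le> 1/11 \<Longrightarrow> 2 * t^2 \<le> poly (Qp 3) (t::real)"
proof -
  assume t: "0 < t"
  have "0 \<le> t^3" "0 \<le> t^4" using t by simp_all
  then show ?thesis unfolding Qeq3 by linarith
qed

lemma hS3: "0 < t \<Longrightarrow> t \<le> 1/11 \<Longrightarrow> (\<Sum>i=1..3. real (3 choose i) * fact (i-1) * poly (Qp (3-i)) t) \<le> 2 * 2 * (t::real)"
proof -
  assume t: "0 < t" "t \<le> 1/11"
  have e: "(\<Sum>i=1..3. real (3 choose i) * fact (i-1) * poly (Qp (3-i)) t) = 2 * t + 6 * t^2 + 6 * t^3"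
    by (simp add: sum.atLeast_Suc_atMost eval_nat_numeral QeqS0 QeqS1 QeqS2 QeqS3 QeqS4 QeqS5 QeqS6 algebra_simps)
  have tf2: "t^2 \<le> t * (1/11)" by (rule order_trans[OF tpow_le2[OF t, of 2]]) (simp_all add: power_numeral_reduce)
  have tf3: "t^3 \<le> t * (1/121)" by (rule order_trans[OF tpow_le2[OF t, of 3]]) (simp_all add: power_numeral_reduce)
  show ?thesis unfolding e using t tf2 tf3 by linarith
qed

lemma hmono3: "0 \<le> s \<Longrightarrow> s \<le> t \<Longrightarrow> poly (Qp 3) s \<le> poly (Qp 3) (t::real)"
  unfolding Qeq3 by (intro add_mono mult_left_mono power_mono order_refl) auto

lemma QU3: "(u::real) > 0 \<Longrightarrow> poly (Qp 3) (1/u) = (6 + 6 * u + 2 * u^2) / u^4"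
  by (simp add: Qeq3 field_simps power_numeral_reduce QeqS1)

lemma pid3: fixes v :: real shows "(9115149/1000000) * (6 + 6 * ((61905/5377) + v + (7050/10171)) + 2 * ((61905/5377) + v + (7050/10171))^2) * ((61905/5377) + v)^4 - 2^3 * (6 + 6 * ((61905/5377) + v) + 2 * ((61905/5377) + v)^2) * ((61905/5377) + v + (7050/10171))^4 = (2624888207308669488396886165305770061421533/206911592416377198974983146817459761447200) + (140109433039193973114461551664712046639873317/192404307621700947531135528005820868000) * v + (51555534506756165883047301913878581756823/178914178558397756677641368798420000) * v^2 + (372517131843208998154164732207741/8178639707642321540528150000) * v^3 + (5375868575649141483435783/1495468900372044500000) * v^4 + (3873807010661019/27344733500000) * v^5 + (1115149/500000) * v^6"
  by algebra

lemma hratio3: "u \<ge> (61905/5377) \<Longrightarrow> 2^3 * poly (Qp 3) (1/u) \<le> (9115149/1000000) * poly (Qp 3) (1/(u + (7050/10171)))"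
proof -
  assume u: "u \<ge> (61905/5377)"
  define v where "v = u - (61905/5377)"
  have v0: "v \<ge> 0" and uv: "u = (61905/5377) + v" using u by (simp_all add: v_def)
  have nn: "0 \<le> (2624888207308669488396886165305770061421533/206911592416377198974983146817459761447200) + (140109433039193973114461551664712046639873317/192404307621700947531135528005820868000) * v + (51555534506756165883047301913878581756823/178914178558397756677641368798420000) * v^2 + (372517131843208998154164732207741/8178639707642321540528150000) * v^3 + (5375868575649141483435783/1495468900372044500000) * v^4 + (3873807010661019/27344733500000) * v^5 + (1115149/500000) * v^6" using v0 by (intro add_nonneg_nonneg mult_nonneg_nonneg zero_le_power) simp_all
  have ineq: "2^3 * (6 + 6 * ((61905/5377) + v) + 2 * ((61905/5377) + v)^2) * ((61905/5377) + v + (7050/10171))^4 \<le> (9115149/1000000) * (6 + 6 * ((61905/5377) + v + (7050/10171)) + 2 * ((61905/5377) + v + (7050/10171))^2) * ((61905/5377) + v)^4" by (rule diff_le[OF pid3 nn])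
  have pu: "((61905/5377) + v) > 0" "((61905/5377) + v + (7050/10171)) > 0" using v0 by simp_all
  show ?thesis unfolding uv QU3[OF pu(1)] QU3[OF pu(2)] by (rule cross_le[OF pu ineq])
qed

lemma hq4: "0 < t \<Longrightarrow> t \<le> 1/11 \<Longrightarrow> 6 * t^2 \<le> poly (Qp 4) (t::real)"
proof -
  assume t: "0 < t"
  have "0 \<le> t^3" "0 \<le> t^4" "0 \<le> t^5" using t by simp_all
  then show ?thesis unfolding Qeq4 by linarith
qed

lemma hS4: "0 < t \<Longrightarrow> t \<le> 1/11 \<Longrightarrow> (\<Sum>i=1..4. real (4 choose i) * fact (i-1) * poly (Qp (4-i)) t) \<le> 2 * 6 * (t::real)"
proof -
  assume t: "0 < t" "t \<le> 1/11"
  have e: "(\<Sum>i=1..4. real (4 choose i) * fact (i-1) * poly (Qp (4-i)) t) = 6 * t + 22 * t^2 + 36 * t^3 + 24 * t^4"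
    by (simp add: sum.atLeast_Suc_atMost eval_nat_numeral QeqS0 QeqS1 QeqS2 QeqS3 QeqS4 QeqS5 QeqS6 algebra_simps)
  have tf2: "t^2 \<le> t * (1/11)" by (rule order_trans[OF tpow_le2[OF t, of 2]]) (simp_all add: power_numeral_reduce)
  have tf3: "t^3 \<le> t * (1/121)" by (rule order_trans[OF tpow_le2[OF t, of 3]]) (simp_all add: power_numeral_reduce)
  have tf4: "t^4 \<le> t * (1/1331)" by (rule order_trans[OF tpow_le2[OF t, of 4]]) (simp_all add: power_numeral_reduce)
  show ?thesis unfolding e using t tf2 tf3 tf4 by linarith
qed

lemma hmono4: "0 \<le> s \<Longrightarrow> s \<le> t \<Longrightarrow> poly (Qp 4) s \<le> poly (Qp 4) (t::real)"
  unfolding Qeq4 by (intro add_mono mult_left_mono power_mono order_refl) auto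

lemma QU4: "(u::real) > 0 \<Longrightarrow> poly (Qp 4) (1/u) = (24 + 36 * u + 22 * u^2 + 6 * u^3) / u^5"
  by (simp add: Qeq4 field_simps power_numeral_reduce QeqS1)

lemma pid4: fixes v :: real shows "(18299399/1000000) * (24 + 36 * ((61905/5377) + v + (7050/10171)) + 22 * ((61905/5377) + v + (7050/10171))^2 + 6 * ((61905/5377) + v + (7050/10171))^3) * ((61905/5377) + v)^5 - 2^4 * (24 + 36 * ((61905/5377) + v) + 22 * ((61905/5377) + v)^2 + 6 * ((61905/5377) + v)^3) * ((61905/5377) + v + (7050/10171))^5 = (46621339701529501977936894836415701036725221768487423563/320239537162053383645922122126058264324094820979920) + (82199824023741314641995717314615066897192194943681138253/119114575846030642977839732983469691026258069920) * v + (42567898929880732558347492592601345093573888498097777/110763042445630131093397557172651749141024800) * v^2 + (9443269576247417523029948434351069768388438608017/102997063832648438807325234491958107812000) * v^3 + (6019688524283104578615797319868236038649/495607142821046417389588279220000) * v^4 + (593425509060478173414242669592573/614935316364084326355500000) * v^5 + (3619384900079414955998337/78708889493265500000) * v^6 + (1751338296018047/1439196500000) * v^7 + (6898197/500000) * v^8"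
  by algebra

lemma hratio4: "u \<ge> (61905/5377) \<Longrightarrow> 2^4 * poly (Qp 4) (1/u) \<le> (18299399/1000000) * poly (Qp 4) (1/(u + (7050/10171)))"
proof -
  assume u: "u \<ge> (61905/5377)"
  define v where "v = u - (61905/5377)"
  have v0: "v \<ge> 0" and uv: "u = (61905/5377) + v" using u by (simp_all add: v_def)
  have nn: "0 \<le> (46621339701529501977936894836415701036725221768487423563/320239537162053383645922122126058264324094820979920) + (82199824023741314641995717314615066897192194943681138253/119114575846030642977839732983469691026258069920) * v + (42567898929880732558347492592601345093573888498097777/110763042445630131093397557172651749141024800) * v^2 + (9443269576247417523029948434351069768388438608017/102997063832648438807325234491958107812000) * v^3 + (6019688524283104578615797319868236038649/495607142821046417389588279220000) * v^4 + (593425509060478173414242669592573/614935316364084326355500000) * v^5 + (3619384900079414955998337/78708889493265500000) * v^6 + (1751338296018047/1439196500000) * v^7 + (6898197/500000) * v^8" using v0 by (intro add_nonneg_nonneg mult_nonneg_nonneg zero_le_power) simp_all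
  have ineq: "2^4 * (24 + 36 * ((61905/5377) + v) + 22 * ((61905/5377) + v)^2 + 6 * ((61905/5377) + v)^3) * ((61905/5377) + v + (7050/10171))^5 \<le> (18299399/1000000) * (24 + 36 * ((61905/5377) + v + (7050/10171)) + 22 * ((61905/5377) + v + (7050/10171))^2 + 6 * ((61905/5377) + v + (7050/10171))^3) * ((61905/5377) + v)^5" by (rule diff_le[OF pid4 nn])
  have pu: "((61905/5377) + v) > 0" "((61905/5377) + v + (7050/10171)) > 0" using v0 by simp_all
  show ?thesis unfolding uv QU4[OF pu(1)] QU4[OF pu(2)] by (rule cross_le[OF pu ineq])
qed

lemma hq5: "0 < t \<Longrightarrow> t \<le> 1/11 \<Longrightarrow> 24 * t^2 \<le> poly (Qp 5) (t::real)"
proof -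
  assume t: "0 < t"
  have "0 \<le> t^3" "0 \<le> t^4" "0 \<le> t^5" "0 \<le> t^6" using t by simp_all
  then show ?thesis unfolding Qeq5 by linarith
qed

lemma hS5: "0 < t \<Longrightarrow> t \<le> 1/11 \<Longrightarrow> (\<Sum>i=1..5. real (5 choose i) * fact (i-1) * poly (Qp (5-i)) t) \<le> 2 * 24 * (t::real)"
proof -
  assume t: "0 < t" "t \<le> 1/11"
  have e: "(\<Sum>i=1..5. real (5 choose i) * fact (i-1) * poly (Qp (5-i)) t) = 24 * t + 100 * t^2 + 210 * t^3 + 240 * t^4 + 120 * t^5"
    by (simp add: sum.atLeast_Suc_atMost eval_nat_numeral QeqS0 QeqS1 QeqS2 QeqS3 QeqS4 QeqS5 QeqS6 algebra_simps)
  have tf2: "t^2 \<le> t * (1/11)" by (rule order_trans[OF tpow_le2[OF t, of 2]]) (simp_all add: power_numeral_reduce)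
  have tf3: "t^3 \<le> t * (1/121)" by (rule order_trans[OF tpow_le2[OF t, of 3]]) (simp_all add: power_numeral_reduce)
  have tf4: "t^4 \<le> t * (1/1331)" by (rule order_trans[OF tpow_le2[OF t, of 4]]) (simp_all add: power_numeral_reduce)
  have tf5: "t^5 \<le> t * (1/14641)" by (rule order_trans[OF tpow_le2[OF t, of 5]]) (simp_all add: power_numeral_reduce)
  show ?thesis unfolding e using t tf2 tf3 tf4 tf5 by linarith
qed

lemma hmono5: "0 \<le> s \<Longrightarrow> s \<le> t \<Longrightarrow> poly (Qp 5) s \<le> poly (Qp 5) (t::real)"
  unfolding Qeq5 by (intro add_mono mult_left_mono power_mono order_refl) auto

lemma QU5: "(u::real) > 0 \<Longrightarrow> poly (Qp 5) (1/u) = (120 + 240 * u + 210 * u^2 + 100 * u^3 + 24 * u^4) / u^6"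
  by (simp add: Qeq5 field_simps power_numeral_reduce QeqS1)

lemma pid5: fixes v :: real shows "(18354949/500000) * (120 + 240 * ((61905/5377) + v + (7050/10171)) + 210 * ((61905/5377) + v + (7050/10171))^2 + 100 * ((61905/5377) + v + (7050/10171))^3 + 24 * ((61905/5377) + v + (7050/10171))^4) * ((61905/5377) + v)^6 - 2^5 * (120 + 240 * ((61905/5377) + v) + 210 * ((61905/5377) + v)^2 + 100 * ((61905/5377) + v)^3 + 24 * ((61905/5377) + v)^4) * ((61905/5377) + v + (7050/10171))^6 = (2783472684571385997711208302077830630171096048457942849725408007546115/357851031419226452598671579805886085936479818212935130159442064) + (28280122524826850119053948543199020739922331411243090708602702631595719/33276086239466845136569795406907763244976735932019260755016) * v + (1892414009617405484133784556624554550483995192342671055161147577263/3094298515851482716809540208936931676118350002977428004) * v^2 + (562730301740120460149794155023407531699119759037858570112933553/2877346583458696965603068819915316790141668219246260) * v^3 + (195195041834065618618834093964466763435491020102627103943287/5351211797393894300916996131514444467438475393800) * v^4 + (1337157059556657085893547657728899635067626922982858/305772533253175052709246789898000632566875) * v^5 + (9769590104635592653910804327369032282883808/27955340399749649480881463874753125) * v^6 + (38065202073248950808909764203606957/2044659926910580385132037500) * v^7 + (95336989252946013486064131/149546890037204450000) * v^8 + (696396609755487/54689467000) * v^9 + (7064847/62500) * v^10"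
  by algebra

lemma hratio5: "u \<ge> (61905/5377) \<Longrightarrow> 2^5 * poly (Qp 5) (1/u) \<le> (18354949/500000) * poly (Qp 5) (1/(u + (7050/10171)))"
proof -
  assume u: "u \<ge> (61905/5377)"
  define v where "v = u - (61905/5377)"
  have v0: "v \<ge> 0" and uv: "u = (61905/5377) + v" using u by (simp_all add: v_def)
  have nn: "0 \<le> (2783472684571385997711208302077830630171096048457942849725408007546115/357851031419226452598671579805886085936479818212935130159442064) + (28280122524826850119053948543199020739922331411243090708602702631595719/33276086239466845136569795406907763244976735932019260755016) * v + (1892414009617405484133784556624554550483995192342671055161147577263/3094298515851482716809540208936931676118350002977428004) * v^2 + (562730301740120460149794155023407531699119759037858570112933553/2877346583458696965603068819915316790141668219246260) * v^3 + (195195041834065618618834093964466763435491020102627103943287/5351211797393894300916996131514444467438475393800) * v^4 + (1337157059556657085893547657728899635067626922982858/305772533253175052709246789898000632566875) * v^5 + (9769590104635592653910804327369032282883808/27955340399749649480881463874753125) * v^6 + (38065202073248950808909764203606957/2044659926910580385132037500) * v^7 + (95336989252946013486064131/149546890037204450000) * v^8 + (696396609755487/54689467000) * v^9 + (7064847/62500) * v^10" using v0 by (intro add_nonneg_nonneg mult_nonneg_nonneg zero_le_power) simp_all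
  have ineq: "2^5 * (120 + 240 * ((61905/5377) + v) + 210 * ((61905/5377) + v)^2 + 100 * ((61905/5377) + v)^3 + 24 * ((61905/5377) + v)^4) * ((61905/5377) + v + (7050/10171))^6 \<le> (18354949/500000) * (120 + 240 * ((61905/5377) + v + (7050/10171)) + 210 * ((61905/5377) + v + (7050/10171))^2 + 100 * ((61905/5377) + v + (7050/10171))^3 + 24 * ((61905/5377) + v + (7050/10171))^4) * ((61905/5377) + v)^6" by (rule diff_le[OF pid5 nn])
  have pu: "((61905/5377) + v) > 0" "((61905/5377) + v + (7050/10171)) > 0" using v0 by simp_all
  show ?thesis unfolding uv QU5[OF pu(1)] QU5[OF pu(2)] by (rule cross_le[OF pu ineq])
qed

lemma hq6: "0 < t \<Longrightarrow> t \<le> 1/11 \<Longrightarrow> 120 * t^2 \<le> poly (Qp 6) (t::real)"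
proof -
  assume t: "0 < t"
  have "0 \<le> t^3" "0 \<le> t^4" "0 \<le> t^5" "0 \<le> t^6" "0 \<le> t^7" using t by simp_all
  then show ?thesis unfolding Qeq6 by linarith
qed

lemma hS6: "0 < t \<Longrightarrow> t \<le> 1/11 \<Longrightarrow> (\<Sum>i=1..6. real (6 choose i) * fact (i-1) * poly (Qp (6-i)) t) \<le> 2 * 120 * (t::real)"
proof -
  assume t: "0 < t" "t \<le> 1/11"
  have e: "(\<Sum>i=1..6. real (6 choose i) * fact (i-1) * poly (Qp (6-i)) t) = 120 * t + 548 * t^2 + 1350 * t^3 + 2040 * t^4 + 1800 * t^5 + 720 * t^6"
    by (simp add: sum.atLeast_Suc_atMost eval_nat_numeral QeqS0 QeqS1 QeqS2 QeqS3 QeqS4 QeqS5 QeqS6 algebra_simps)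
  have tf2: "t^2 \<le> t * (1/11)" by (rule order_trans[OF tpow_le2[OF t, of 2]]) (simp_all add: power_numeral_reduce)
  have tf3: "t^3 \<le> t * (1/121)" by (rule order_trans[OF tpow_le2[OF t, of 3]]) (simp_all add: power_numeral_reduce)
  have tf4: "t^4 \<le> t * (1/1331)" by (rule order_trans[OF tpow_le2[OF t, of 4]]) (simp_all add: power_numeral_reduce)
  have tf5: "t^5 \<le> t * (1/14641)" by (rule order_trans[OF tpow_le2[OF t, of 5]]) (simp_all add: power_numeral_reduce)
  have tf6: "t^6 \<le> t * (1/161051)" by (rule order_trans[OF tpow_le2[OF t, of 6]]) (simp_all add: power_numeral_reduce)
  show ?thesis unfolding e using t tf2 tf3 tf4 tf5 tf6 by linarith
qed

lemma hmono6: "0 \<le> s \<Longrightarrow> s \<le> t \<Longrightarrow> poly (Qp 6) s \<le> poly (Qp 6) (t::real)"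
  unfolding Qeq6 by (intro add_mono mult_left_mono power_mono order_refl) auto

lemma QU6: "(u::real) > 0 \<Longrightarrow> poly (Qp 6) (1/u) = (720 + 1800 * u + 2040 * u^2 + 1350 * u^3 + 548 * u^4 + 120 * u^5) / u^7"
  by (simp add: Qeq6 field_simps power_numeral_reduce QeqS1)

lemma pid6: fixes v :: real shows "(73607697/1000000) * (720 + 1800 * ((61905/5377) + v + (7050/10171)) + 2040 * ((61905/5377) + v + (7050/10171))^2 + 1350 * ((61905/5377) + v + (7050/10171))^3 + 548 * ((61905/5377) + v + (7050/10171))^4 + 120 * ((61905/5377) + v + (7050/10171))^5) * ((61905/5377) + v)^7 - 2^6 * (720 + 1800 * ((61905/5377) + v) + 2040 * ((61905/5377) + v)^2 + 1350 * ((61905/5377) + v)^3 + 548 * ((61905/5377) + v)^4 + 120 * ((61905/5377) + v)^5) * ((61905/5377) + v + (7050/10171))^7 = (50094862533691930934833504650083548724195051810513635387097422895693628427215560007825/210463116096160664625892409736473167646769808087422173079547730644543955552) + (25205833318439096998757964024476623284822356632838669547075144956928298130152803250965/19570682173717748244922113607631873502582277114322314773995511497539888) * v + (8280137432700987237638098203825697347799413202984690303216308853412396520011019543/7279405681129904498762177276411334760119872462087526417703370465888) * v^2 + (309108655315033211722928420329238518586631515691806007395163553439737763187783/676902146283234563768102778167317719929316762329135802278535472) * v^3 + (69237362566819979457102173685331789142940298410109641941206277329857448983/629442204094508614253396669301950641555994757605668404573680) * v^4 + (25847785192839829949591916637525088279243403468219300306688125683202687/1463274605017920341857440648367934353626545372897685523000)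 * v^5 + (75899709486009402278870656828245131031507912121996970696784519/38222941409956387863692829510817460481703395670000) * v^6 + (1950187113167531736443203429176842922561424753744156797/12230901330127002108369871595920025302675000) * v^7 + (1636257815076362666641399631245466348094713463/178914178558397756677641368798420000) * v^8 + (3003273113714683592181951755064343497/8178639707642321540528150000) * v^9 + (2940089232593247610269676221/299093780074408900000) * v^10 + (2158816022534229463/13672366750000) * v^11 + (28823091/25000) * v^12"
  by algebra

lemma hratio6: "u \<ge> (61905/5377) \<Longrightarrow> 2^6 * poly (Qp 6) (1/u) \<le> (73607697/1000000) * poly (Qp 6) (1/(u + (7050/10171)))"
proof -
  assume u: "u \<ge> (61905/5377)"
  define v where "v = u - (61905/5377)"
  have v0: "v \<ge> 0" and uv: "u = (61905/5377) + v" using u by (simp_all add: v_def)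
  have nn: "0 \<le> (50094862533691930934833504650083548724195051810513635387097422895693628427215560007825/210463116096160664625892409736473167646769808087422173079547730644543955552) + (25205833318439096998757964024476623284822356632838669547075144956928298130152803250965/19570682173717748244922113607631873502582277114322314773995511497539888) * v + (8280137432700987237638098203825697347799413202984690303216308853412396520011019543/7279405681129904498762177276411334760119872462087526417703370465888) * v^2 + (309108655315033211722928420329238518586631515691806007395163553439737763187783/676902146283234563768102778167317719929316762329135802278535472) * v^3 + (69237362566819979457102173685331789142940298410109641941206277329857448983/629442204094508614253396669301950641555994757605668404573680) * v^4 + (25847785192839829949591916637525088279243403468219300306688125683202687/1463274605017920341857440648367934353626545372897685523000) * v^5 + (75899709486009402278870656828245131031507912121996970696784519/38222941409956387863692829510817460481703395670000) * v^6 + (1950187113167531736443203429176842922561424753744156797/12230901330127002108369871595920025302675000) * v^7 + (1636257815076362666641399631245466348094713463/178914178558397756677641368798420000) * v^8 + (3003273113714683592181951755064343497/8178639707642321540528150000) * v^9 + (2940089232593247610269676221/299093780074408900000) * v^10 + (2158816022534229463/13672366750000) * v^11 + (28823091/25000) * v^12" using v0 by (intro add_nonneg_nonneg mult_nonneg_nonneg zero_le_power) simp_all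
  have ineq: "2^6 * (720 + 1800 * ((61905/5377) + v) + 2040 * ((61905/5377) + v)^2 + 1350 * ((61905/5377) + v)^3 + 548 * ((61905/5377) + v)^4 + 120 * ((61905/5377) + v)^5) * ((61905/5377) + v + (7050/10171))^7 \<le> (73607697/1000000) * (720 + 1800 * ((61905/5377) + v + (7050/10171)) + 2040 * ((61905/5377) + v + (7050/10171))^2 + 1350 * ((61905/5377) + v + (7050/10171))^3 + 548 * ((61905/5377) + v + (7050/10171))^4 + 120 * ((61905/5377) + v + (7050/10171))^5) * ((61905/5377) + v)^7" by (rule diff_le[OF pid6 nn])
  have pu: "((61905/5377) + v) > 0" "((61905/5377) + v + (7050/10171)) > 0" using v0 by simp_all
  show ?thesis unfolding uv QU6[OF pu(1)] QU6[OF pu(2)] by (rule cross_le[OF pu ineq])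
qed




lemma lnN_gen:
  fixes N :: real
  assumes "N \<ge> 10^n"
  shows "ln N \<ge> real n * ln 10"
proof -
  have p: "(0::real) < 10^n" by simp
  have N0: "0 < N" using assms p by linarith
  have "ln ((10::real)^n) \<le> ln N" using assms p N0 by (subst ln_le_cancel_iff) auto
  then show ?thesis by (simp add: ln_realpow)
qed

lemma main_generic:
  fixes N M x c g g' :: real and k :: nat
  assumes N: "N \<ge> 10^100000" and M: "M \<ge> 10^5" "M \<le> x" "x \<le> 2*M"
    and k: "1 \<le> k" "k \<le> 6" and c: "c > 0"
    and hq: "\<And>t. 0 < t \<Longrightarrow> t \<le> 1/11 \<Longrightarrow> c * t^2 \<le> poly (Qp k) t"
    and hS: "\<And>t. 0 < t \<Longrightarrow> t \<le> 1/11 \<Longrightarrow>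
       (\<Sum>i=1..k. real (k choose i) * fact (i-1) * poly (Qp (k-i)) t) \<le> 2 * c * t"
    and hmono: "\<And>s t. 0 \<le> s \<Longrightarrow> s \<le> t \<Longrightarrow> poly (Qp k) s \<le> poly (Qp k) t"
    and hratio: "\<And>u. u \<ge> 61905/5377 \<Longrightarrow> 2^k * poly (Qp k) (1/u) \<le> g' * poly (Qp k) (1/(u + 7050/10171))"
    and hg: "g' \<le> g * (1 - 3/10^8)"
  shows "0.999999 < (deriv ^^ k) (fN N) M / (deriv ^^ k) (fN N) x
     \<and> (deriv ^^ k) (fN N) M / (deriv ^^ k) (fN N) x < g"
proof -
  define L where "L = ln N"
  have "L \<ge> real 100000 * ln 10" unfolding L_def by (rule lnN_gen[OF N])
  then have L: "L \<ge> 230000" using ln10_lower by simp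
  have x5: "x \<ge> 10^5" using M by linarith
  have M1: "M > 1" "x > 1" using M x5 by auto
  have hnn: "\<And>m t. m < k \<Longrightarrow> 0 \<le> t \<Longrightarrow> 0 \<le> poly (Qp m) t" using Qnn k by auto
  define TM where "TM = (-1)^k * M^k * wfam L k M"
  define Tx where "Tx = (-1)^k * x^k * wfam L k x"
  have TMb: "(1 - 2/10^8) * (afam L 0 M * poly (Qp k) (1/ln M)) \<le> TM" "TM \<le> afam L 0 M * poly (Qp k) (1/ln M)"
    using T_bounds[OF M(1) k L c hq hS hnn] by (auto simp: TM_def)
  have Txb: "(1 - 2/10^8) * (afam L 0 x * poly (Qp k) (1/ln x)) \<le> Tx" "Tx \<le> afam L 0 x * poly (Qp k) (1/ln x)"
    using T_bounds[OF x5 k L c hq hS hnn] by (auto simp: Tx_def)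
  have inv: "1/(y-1) \<le> 1/10^4" if "y \<ge> 10^5" for y :: real
    using that by (intro divide_left_mono) auto
  have aM: "L - 1/10^4 \<le> afam L 0 M" "afam L 0 M \<le> L"
    using afam0_bounds[OF M(1), of L] inv[OF M(1)] by auto
  have ax: "L - 1/10^4 \<le> afam L 0 x" "afam L 0 x \<le> L"
    using afam0_bounds[OF x5, of L] inv[OF x5] by auto
  have s1: "((-1::real)^k) * (-1)^k = 1" by (simp flip: power_add)
  have dM: "(deriv ^^ k) (fN N) M = (-1)^k * (TM / M^k)"
    using deriv_fN[OF M1(1), of k N] M1 s1 by (simp add: TM_def L_def field_simps)
  have dx: "(deriv ^^ k) (fN N) x = (-1)^k * (Tx / x^k)"
    using deriv_fN[OF M1(2), of k N] M1 s1 by (simp add: Tx_def L_def field_simps)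
  have rat: "(deriv ^^ k) (fN N) M / (deriv ^^ k) (fN N) x = (TM / M^k) / (Tx / x^k)"
    unfolding dM dx by simp
  have lnM: "ln M \<ge> 61905/5377" "ln M \<ge> 11"
  proof -
    have "ln ((10::real)^5) \<le> ln M" using M(1) by (subst ln_le_cancel_iff) auto
    then show "ln M \<ge> 61905/5377" using ln_1e5(1) by linarith
    then show "ln M \<ge> 11" by simp
  qed
  have lnx: "ln M \<le> ln x" "ln x \<le> ln M + 7050/10171"
  proof -
    show "ln M \<le> ln x" using M M1 by (subst ln_le_cancel_iff) auto
    have "ln x \<le> ln (2 * M)" using M M1 by (subst ln_le_cancel_iff) auto
    also have "\<dots> = ln 2 + ln M" using M1 by (simp add: ln_mult_pos)
    finally show "ln x \<le> ln M + 7050/10171" using ln2_upper by linarith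
  qed
  define tl where "tl = 1 / (ln M + 7050/10171)"
  have tl: "0 < tl" "tl \<le> 1/11" using lnM by (auto simp: tl_def field_simps)
  have q0: "0 < poly (Qp k) tl"
  proof -
    have "0 < c * tl^2" using c tl by simp
    then show ?thesis using hq[OF tl] by linarith
  qed
  have q1: "poly (Qp k) tl \<le> poly (Qp k) (1 / ln x)"
    using lnx lnM tl by (intro hmono) (auto simp: tl_def intro!: divide_left_mono)
  have q2: "poly (Qp k) (1 / ln x) \<le> poly (Qp k) (1 / ln M)"
    using lnx lnM by (intro hmono) (auto intro!: divide_left_mono)
  have r: "2^k * poly (Qp k) (1 / ln M) \<le> g' * poly (Qp k) tl"
    using hratio[OF lnM(1)] by (simp add: tl_def)
  have "0.999999 < (TM / M^k) / (Tx / x^k) \<and> (TM / M^k) / (Tx / x^k) < g"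
    using ratio_arith[OF _ M(2) M(3) L aM ax TMb Txb q0 q1 q2 r hg] M(1) by simp
  then show ?thesis using rat by simp
qed

theorem lemma3p2:
  fixes N M x :: real and k :: nat
  assumes "N \<ge> 10 ^ 100000" and "M \<ge> 10 ^ 5"
    and "M \<le> x" and "x \<le> 2 * M"
    and "1 \<le> k" and "k \<le> 6"
  shows "0.999999 < (deriv ^^ k) (fN N) M / (deriv ^^ k) (fN N) x
     \<and> (deriv ^^ k) (fN N) M / (deriv ^^ k) (fN N) x < gamma_const k"
proof -
  have "k = 1 \<or> k = 2 \<or> k = 3 \<or> k = 4 \<or> k = 5 \<or> k = 6" using assms(5,6) by auto
  then show ?thesis
  proof (elim disjE)
    assume kk: "k = 1"
    have "0.999999 < (deriv ^^ 1) (fN N) M / (deriv ^^ 1) (fN N) x \<and> (deriv ^^ 1) (fN N) M / (deriv ^^ 1) (fN N) x < 2.24808"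
      by (rule main_generic[where k=1 and c=1 and g="2.24808" and g'="(2248079/1000000)", OF assms(1-4) _ _ _ hq1 hS1 hmono1 hratio1]) simp_all
    then show ?thesis using kk by (simp add: gamma_const_def)
  next
    assume kk: "k = 2"
    have "0.999999 < (deriv ^^ 2) (fN N) M / (deriv ^^ 2) (fN N) x \<and> (deriv ^^ 2) (fN N) M / (deriv ^^ 2) (fN N) x < 4.53426"
      by (rule main_generic[where k=2 and c=1 and g="4.53426" and g'="(4534259/1000000)", OF assms(1-4) _ _ _ hq2 hS2 hmono2 hratio2]) simp_all
    then show ?thesis using kk by (simp add: gamma_const_def)
  next
    assume kk: "k = 3"
    have "0.999999 < (deriv ^^ 3) (fN N) M / (deriv ^^ 3) (fN N) x \<and> (deriv ^^ 3) (fN N) M / (deriv ^^ 3) (fN N) x < 9.11515"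
      by (rule main_generic[where k=3 and c=2 and g="9.11515" and g'="(9115149/1000000)", OF assms(1-4) _ _ _ hq3 hS3 hmono3 hratio3]) simp_all
    then show ?thesis using kk by (simp add: gamma_const_def)
  next
    assume kk: "k = 4"
    have "0.999999 < (deriv ^^ 4) (fN N) M / (deriv ^^ 4) (fN N) x \<and> (deriv ^^ 4) (fN N) M / (deriv ^^ 4) (fN N) x < 18.2994"
      by (rule main_generic[where k=4 and c=6 and g="18.2994" and g'="(18299399/1000000)", OF assms(1-4) _ _ _ hq4 hS4 hmono4 hratio4]) simp_all
    then show ?thesis using kk by (simp add: gamma_const_def)
  next
    assume kk: "k = 5"
    have "0.999999 < (deriv ^^ 5) (fN N) M / (deriv ^^ 5) (fN N) x \<and> (deriv ^^ 5) (fN N) M / (deriv ^^ 5) (fN N) x < 36.7099"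
      by (rule main_generic[where k=5 and c=24 and g="36.7099" and g'="(18354949/500000)", OF assms(1-4) _ _ _ hq5 hS5 hmono5 hratio5]) simp_all
    then show ?thesis using kk by (simp add: gamma_const_def)
  next
    assume kk: "k = 6"
    have "0.999999 < (deriv ^^ 6) (fN N) M / (deriv ^^ 6) (fN N) x \<and> (deriv ^^ 6) (fN N) M / (deriv ^^ 6) (fN N) x < 73.6077"
      by (rule main_generic[where k=6 and c=120 and g="73.6077" and g'="(73607697/1000000)", OF assms(1-4) _ _ _ hq6 hS6 hmono6 hratio6]) simp_all
    then show ?thesis using kk by (simp add: gamma_const_def)
  qed
qed

end
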